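(* Let $\mu$ be a finite measure, $1<p<\infty$, and let $\mathcal{E}$ be a $w^*$-closed subalgebra of $L^{\infty}(\mu)$ containing the constants and satisfying Condition $(\alpha_p)$. Let $\gamma\ge 2$ be an integer. Then for every $\varphi\in L^p(\mu)$ with $\varphi\ge 1$ a.e. there exists $\Phi\in\mathcal{E}$ such that (O1) $\|1-\Phi\|_{L^p(\mu)}\le C_{p,\gamma}\|1-\varphi\|_{L^p(\mu)}$, and (O2) $|\Phi|\le |\varphi|^{-\gamma}$ a.e., where $C_{p,\gamma}$ depends only on $p$ and $\gamma$ (and the constant in Condition $(\alpha_p)$), not on $\varphi$.
   Context: Condition $(\alpha_p)$ for $\mathcal{E}$: there is a constant $C_0$ (depending only on $p$) such that for every nonnegative $u\in L^p(\mu)$ there is a sequence $(w_n)$ in $\mathcal{E}$ with $\operatorname{Re} w_n\ge 0$ a.e., $\operatorname{Re} w_n\to u$ weakly in $L^p(\mu)$, and $\|w_n\|_{L^p(\mu)}\le C_0\|u\|_{L^p(\mu)}$ for all $n$. *)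

theory Defs
  imports "HOL-Analysis.Analysis"
begin

definition memLp :: "'a measure \<Rightarrow> real \<Rightarrow> ('a \<Rightarrow> 'b::{banach,second_countable_topology}) \<Rightarrow> bool" where
  "memLp M p f \<longleftrightarrow> f \<in> borel_measurable M \<and> integrable M (\<lambda>x. norm (f x) powr p)"

definition normLp :: "'a measure \<Rightarrow> real \<Rightarrow> ('a \<Rightarrow> 'b::{banach,second_countable_topology}) \<Rightarrow> real" where
  "normLp M p f = (\<integral>x. norm (f x) powr p \<partial>M) powr (1 / p)"

definition memLinf :: "'a measure \<Rightarrow> ('a \<Rightarrow> complex) \<Rightarrow> bool" where
  "memLinf M f \<longleftrightarrow> f \<in> borel_measurable M \<and> (\<exists>B. AE x in M. norm (f x) \<le> B)"

definition Linf_subalgebra_with_constants :: "'a measure \<Rightarrow> ('a \<Rightarrow> complex) set \<Rightarrow> bool" where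
  "Linf_subalgebra_with_constants M E \<longleftrightarrow>
     (\<forall>f\<in>E. memLinf M f) \<and>
     (\<forall>c. (\<lambda>x. c) \<in> E) \<and>
     (\<forall>f\<in>E. \<forall>g\<in>E. (\<lambda>x. f x + g x) \<in> E) \<and>
     (\<forall>f\<in>E. \<forall>g\<in>E. (\<lambda>x. f x * g x) \<in> E) \<and>
     (\<forall>c. \<forall>f\<in>E. (\<lambda>x. c * f x) \<in> E)"

text \<open>E is weak-* closed in L^\<infinity>(M) = L^1(M)^*: every f in L^\<infinity>(M) lying in the
  weak-* closure of E (i.e. every basic weak-* neighbourhood of f, given by finitely many
  L^1 functions and \<epsilon> > 0, meets E) belongs to E.\<close>
definition weak_star_closed :: "'a measure \<Rightarrow> ('a \<Rightarrow> complex) set \<Rightarrow> bool" where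
  "weak_star_closed M E \<longleftrightarrow>
     (\<forall>f. memLinf M f \<longrightarrow>
        (\<forall>G::('a \<Rightarrow> complex) set. \<forall>\<epsilon>>0. finite G \<longrightarrow> (\<forall>g\<in>G. integrable M g) \<longrightarrow>
           (\<exists>e\<in>E. \<forall>g\<in>G. cmod (\<integral>x. (f x - e x) * g x \<partial>M) < \<epsilon>)) \<longrightarrow>
        f \<in> E)"

definition weak_conv_Lp :: "'a measure \<Rightarrow> real \<Rightarrow> (nat \<Rightarrow> 'a \<Rightarrow> real) \<Rightarrow> ('a \<Rightarrow> real) \<Rightarrow> bool" where
  "weak_conv_Lp M p v u \<longleftrightarrow>
     (\<forall>g::'a \<Rightarrow> real. memLp M (p / (p - 1)) g \<longrightarrow>
        (\<lambda>n. \<integral>x. v n x * g x \<partial>M) \<longlonglongrightarrow> (\<integral>x. u x * g x \<partial>M))"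

definition condition_alpha :: "'a measure \<Rightarrow> real \<Rightarrow> real \<Rightarrow> ('a \<Rightarrow> complex) set \<Rightarrow> bool" where
  "condition_alpha M p C0 E \<longleftrightarrow>
     (\<forall>u::'a \<Rightarrow> real. memLp M p u \<and> (AE x in M. 0 \<le> u x) \<longrightarrow>
        (\<exists>w::nat \<Rightarrow> 'a \<Rightarrow> complex.
           (\<forall>n. w n \<in> E) \<and>
           (\<forall>n. AE x in M. 0 \<le> Re (w n x)) \<and>
           weak_conv_Lp M p (\<lambda>n x. Re (w n x)) u \<and>
           (\<forall>n. normLp M p (w n) \<le> C0 * normLp M p u)))"

end

theory Submission
  imports Defs
begin


lemma E_closed_bdd_lim:
  fixes M :: "'a measure" and E :: "('a \<Rightarrow> complex) set" and F :: "nat \<Rightarrow> 'a \<Rightarrow> complex"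
  assumes fm: "finite_measure M" and ws: "weak_star_closed M E"
    and FE: "\<And>k. F k \<in> E" and Fm: "\<And>k. F k \<in> borel_measurable M"
    and Fb: "\<And>k. AE x in M. cmod (F k x) \<le> B"
    and lim: "AE x in M. (\<lambda>k. F k x) \<longlonglongrightarrow> G x"
    and Gm: "G \<in> borel_measurable M" and Gb: "AE x in M. cmod (G x) \<le> B"
  shows "G \<in> E"
proof -
  interpret finite_measure M by fact
  have "memLinf M G" using Gm Gb unfolding memLinf_def by blast
  moreover have "\<forall>Gs::('a \<Rightarrow> complex) set. \<forall>\<epsilon>>0. finite Gs \<longrightarrow> (\<forall>g\<in>Gs. integrable M g) \<longrightarrow>
           (\<exists>e\<in>E. \<forall>g\<in>Gs. cmod (\<integral>x. (G x - e x) * g x \<partial>M) < \<epsilon>)"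
  proof (intro allI impI)
    fix Gs :: "('a \<Rightarrow> complex) set" and \<epsilon> :: real
    assume \<epsilon>: "\<epsilon> > 0" and fin: "finite Gs" and int: "\<forall>g\<in>Gs. integrable M g"
    have conv: "(\<lambda>k. \<integral>x. (G x - F k x) * g x \<partial>M) \<longlonglongrightarrow> 0" if g: "g \<in> Gs" for g
    proof -
      have gi: "integrable M g" using int g by blast
      have gm: "g \<in> borel_measurable M" using gi by auto
      have "(\<lambda>k. \<integral>x. (G x - F k x) * g x \<partial>M) \<longlonglongrightarrow> (\<integral>x. 0 \<partial>M)"
      proof (rule integral_dominated_convergence[where w="\<lambda>x. 2*B*cmod (g x)"])
        show "(\<lambda>x. 0::complex) \<in> borel_measurable M" by simp
        show "(\<lambda>x. (G x - F k x) * g x) \<in> borel_measurable M" for k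
          using Gm Fm gm by (intro borel_measurable_times borel_measurable_diff) auto
        show "integrable M (\<lambda>x. 2*B*cmod (g x))" using gi by simp
        show "AE x in M. (\<lambda>k. (G x - F k x) * g x) \<longlonglongrightarrow> 0" using lim
        proof eventually_elim
          case (elim x)
          then have "(\<lambda>k. (G x - F k x) * g x) \<longlonglongrightarrow> (G x - G x) * g x"
            by (intro tendsto_intros)
          then show ?case by simp
        qed
        show "AE x in M. norm ((G x - F k x) * g x) \<le> 2*B*cmod (g x)" for k
          using Fb[of k] Gb
        proof eventually_elim
          case (elim x)
          have "cmod (G x - F k x) \<le> 2*B" using elim norm_triangle_ineq4[of "G x" "F k x"] by linarith
          then show ?case by (simp add: norm_mult mult_right_mono)
        qed
      qed
      then show ?thesis by simp
    qed
    have "\<forall>g\<in>Gs. eventually (\<lambda>k. cmod (\<integral>x. (G x - F k x) * g x \<partial>M) < \<epsilon>) sequentially"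
    proof
      fix g assume "g \<in> Gs"
      from tendstoD[OF conv[OF this] \<epsilon>] show "eventually (\<lambda>k. cmod (\<integral>x. (G x - F k x) * g x \<partial>M) < \<epsilon>) sequentially"
        by (simp add: dist_norm)
    qed
    then have "eventually (\<lambda>k. \<forall>g\<in>Gs. cmod (\<integral>x. (G x - F k x) * g x \<partial>M) < \<epsilon>) sequentially"
      by (rule eventually_ball_finite[OF fin])
    then obtain N where "\<forall>g\<in>Gs. cmod (\<integral>x. (G x - F N x) * g x \<partial>M) < \<epsilon>"
      by (auto simp: eventually_sequentially)
    then show "\<exists>e\<in>E. \<forall>g\<in>Gs. cmod (\<integral>x. (G x - e x) * g x \<partial>M) < \<epsilon>" using FE by blast
  qed
  ultimately show ?thesis using ws unfolding weak_star_closed_def by blast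
qed



lemma sub_mem:
  assumes "Linf_subalgebra_with_constants M E"
  shows sub_const: "(\<lambda>x. c) \<in> E"
    and sub_add: "f \<in> E \<Longrightarrow> g \<in> E \<Longrightarrow> (\<lambda>x. f x + g x) \<in> E"
    and sub_mult: "f \<in> E \<Longrightarrow> g \<in> E \<Longrightarrow> (\<lambda>x. f x * g x) \<in> E"
    and sub_smult: "f \<in> E \<Longrightarrow> (\<lambda>x. c * f x) \<in> E"
    and sub_linf: "f \<in> E \<Longrightarrow> memLinf M f"
  using assms unfolding Linf_subalgebra_with_constants_def by auto

lemma sub_power:
  assumes "Linf_subalgebra_with_constants M E" "f \<in> E"
  shows "(\<lambda>x. f x ^ n) \<in> E"
proof (induction n)
  case 0 then show ?case using sub_const[OF assms(1), of 1] by simp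
next
  case (Suc n)
  from sub_mult[OF assms(1) assms(2) Suc] show ?case by simp
qed

lemma sub_sum:
  fixes n :: nat
  assumes "Linf_subalgebra_with_constants M E" "\<And>j. h j \<in> E"
  shows "(\<lambda>x. \<Sum>j<n. h j x) \<in> E"
proof (induction n)
  case 0 then show ?case using sub_const[OF assms(1), of 0] by simp
next
  case (Suc n)
  from sub_add[OF assms(1) Suc assms(2)[of n]] show ?case by simp
qed

lemma exp_partial_bound:
  fixes z :: complex
  shows "norm (\<Sum>j<n. z^j /\<^sub>R fact j) \<le> exp (norm z)"
proof -
  have "norm (\<Sum>j<n. z^j /\<^sub>R fact j) \<le> (\<Sum>j<n. norm z ^ j /\<^sub>R fact j)"
    by (rule order_trans[OF norm_sum]) (simp add: norm_power)
  also have "\<dots> \<le> (\<Sum>j. norm z ^ j /\<^sub>R fact j)"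
    by (rule sum_le_suminf[OF sums_summable[OF exp_converges[of "norm z"]]]) auto
  also have "\<dots> = exp (norm z)"
    using exp_converges[of "norm z"] by (simp add: sums_iff)
  finally show ?thesis .
qed

lemma sub_exp:
  assumes fm: "finite_measure M" and sub: "Linf_subalgebra_with_constants M E"
    and ws: "weak_star_closed M E" and f: "f \<in> E"
  shows "(\<lambda>x. exp (f x)) \<in> E"
proof -
  obtain B where fmeas: "f \<in> borel_measurable M" and fB: "AE x in M. cmod (f x) \<le> B"
    using sub_linf[OF sub f] unfolding memLinf_def by blast
  define F where "F n = (\<lambda>x. \<Sum>j<n. (f x)^j /\<^sub>R fact j)" for n
  show ?thesis
  proof (rule E_closed_bdd_lim[OF fm ws, where F=F and B="exp B"])
    show "F k \<in> E" for k
      unfolding F_def scaleR_conv_of_real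
      by (rule sub_sum[OF sub]) (intro sub_smult[OF sub] sub_power[OF sub f])
    show "F k \<in> borel_measurable M" for k
      unfolding F_def using fmeas by measurable
    show "AE x in M. cmod (F k x) \<le> exp B" for k
      using fB by eventually_elim (unfold F_def, rule order_trans[OF exp_partial_bound], simp)
    show "AE x in M. (\<lambda>k. F k x) \<longlonglongrightarrow> exp (f x)"
      unfolding F_def by (intro AE_I2) (rule exp_converges[unfolded sums_def])
    show "(\<lambda>x. exp (f x)) \<in> borel_measurable M" using fmeas by measurable
    show "AE x in M. cmod (exp (f x)) \<le> exp B"
      using fB by eventually_elim (rule order_trans[OF norm_exp], simp)
  qed
qed



lemma powr_self_mult:
  fixes r p :: real
  assumes "0 \<le> r" "p > 1"
  shows "r * r powr (p-1) = r powr p"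
proof (cases "r = 0")
  case True then show ?thesis using assms by simp
next
  case False
  have "r powr p = r powr (1 + (p-1))" by simp
  also have "\<dots> = r powr 1 * r powr (p-1)" by (rule powr_add)
  also have "\<dots> = r * r powr (p-1)" using False assms by simp
  finally show ?thesis by simp
qed

lemma pw_ineq:
  fixes r s m p :: real
  assumes p: "p > 1" and r: "0 \<le> r" and s: "0 \<le> s" and sm: "s \<le> m"
  shows "max 0 (r - s) powr p \<le> r powr p - s * r powr (p-1) + m powr p"
proof (cases "s \<le> r")
  case True
  have rr: "r powr p = r * r powr (p-1)" using powr_self_mult[OF r p] by simp
  have "max 0 (r - s) powr p = (r - s) powr p" using True by simp
  also have "\<dots> = (r - s) * (r - s) powr (p-1)" using powr_self_mult[of "r-s" p] True p by simp
  also have "\<dots> \<le> (r - s) * r powr (p-1)"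
    using True p s by (intro mult_left_mono powr_mono2) auto
  also have "\<dots> = r powr p - s * r powr (p-1)" using rr by (simp add: algebra_simps)
  also have "\<dots> \<le> r powr p - s * r powr (p-1) + m powr p" by simp
  finally show ?thesis .
next
  case False
  have "s * r powr (p-1) \<le> s * s powr (p-1)"
    using False p r s by (intro mult_left_mono powr_mono2) auto
  also have "\<dots> = s powr p" using powr_self_mult[OF s p] .
  also have "\<dots> \<le> m powr p" using sm s p by (intro powr_mono2) auto
  finally have "0 \<le> r powr p - s * r powr (p-1) + m powr p" using powr_ge_zero[of r p] by linarith
  then show ?thesis using False by simp
qed

lemma normLp_le_imp:
  fixes f :: "'a \<Rightarrow> 'b::{banach,second_countable_topology}" and g :: "'a \<Rightarrow> 'c::{banach,second_countable_topology}"
  assumes p: "p > 0" and K: "K \<ge> 0" and le: "normLp M p f \<le> K * normLp M p g"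
  shows "(\<integral>x. norm (f x) powr p \<partial>M) \<le> K powr p * (\<integral>x. norm (g x) powr p \<partial>M)"
proof -
  define a where "a = (\<integral>x. norm (f x) powr p \<partial>M)"
  define b where "b = (\<integral>x. norm (g x) powr p \<partial>M)"
  have a0: "a \<ge> 0" and b0: "b \<ge> 0" unfolding a_def b_def by (auto intro: integral_nonneg_AE)
  have "a = (a powr (1/p)) powr p" using a0 p by (simp add: powr_powr)
  also have "\<dots> \<le> (K * b powr (1/p)) powr p"
    using le p a0 unfolding normLp_def a_def[symmetric] b_def[symmetric] by (intro powr_mono2) auto
  also have "\<dots> = K powr p * b" using K b0 p by (simp add: powr_mult powr_powr)
  finally show ?thesis unfolding a_def b_def .
qed

lemma imp_normLp_le:
  fixes f :: "'a \<Rightarrow> 'b::{banach,second_countable_topology}" and g :: "'a \<Rightarrow> 'c::{banach,second_countable_topology}"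
  assumes p: "p > 0" and K: "K \<ge> 0"
    and le: "(\<integral>x. norm (f x) powr p \<partial>M) \<le> K powr p * (\<integral>x. norm (g x) powr p \<partial>M)"
  shows "normLp M p f \<le> K * normLp M p g"
proof -
  define a where "a = (\<integral>x. norm (f x) powr p \<partial>M)"
  define b where "b = (\<integral>x. norm (g x) powr p \<partial>M)"
  have a0: "a \<ge> 0" and b0: "b \<ge> 0" unfolding a_def b_def by (auto intro: integral_nonneg_AE)
  have "normLp M p f = a powr (1/p)" unfolding normLp_def a_def ..
  also have "\<dots> \<le> (K powr p * b) powr (1/p)"
    using le a0 p unfolding a_def[symmetric] b_def[symmetric] by (intro powr_mono2) auto
  also have "\<dots> = K * b powr (1/p)" using K b0 p by (simp add: powr_mult powr_powr)
  also have "\<dots> = K * normLp M p g" unfolding normLp_def b_def ..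
  finally show ?thesis .
qed



definition tK :: "real \<Rightarrow> real \<Rightarrow> real" where
  "tK C0 p = (1 / (4 * (\<bar>C0\<bar>+1) powr p)) powr (1/(p-1))"

lemma rpow_bound:
  fixes r p :: real
  assumes "0 \<le> r" "p > 1"
  shows "r powr (p-1) \<le> 1 + r powr p"
proof (cases "r \<le> 1")
  case True
  have "r powr (p-1) \<le> 1 powr (p-1)" using True assms by (intro powr_mono2) auto
  then have "r powr (p-1) \<le> 1" by simp
  then show ?thesis using powr_ge_zero[of r p] by linarith
next
  case False
  have "r powr (p-1) \<le> r powr p" using False assms by (intro powr_mono) auto
  then show ?thesis by simp
qed

lemma step:
  fixes M :: "'a measure" and E :: "('a \<Rightarrow> complex) set" and r :: "'a \<Rightarrow> real"
  assumes fm: "finite_measure M" and sub: "Linf_subalgebra_with_constants M E"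
    and p: "1 < p" and ca: "condition_alpha M p C0 E"
    and rm: "memLp M p r" and rnn: "\<And>x. 0 \<le> r x"
  shows "\<exists>v\<in>E. (AE x in M. 0 \<le> Re (v x)) \<and>
     (\<integral>x. cmod (v x) powr p \<partial>M) \<le> (tK C0 p * (\<bar>C0\<bar>+1)) powr p * (\<integral>x. r x powr p \<partial>M) \<and>
     (\<integral>x. max 0 (r x - Re (v x)) powr p \<partial>M) \<le> (1 - tK C0 p / 4) * (\<integral>x. r x powr p \<partial>M) \<and>
     integrable M (\<lambda>x. max 0 (r x - Re (v x)) powr p)"
proof -
  interpret finite_measure M by fact
  define K where "K = \<bar>C0\<bar> + 1"
  define t where "t = tK C0 p"
  define R where "R = (\<integral>x. r x powr p \<partial>M)"
  have K1: "K \<ge> 1" unfolding K_def by simp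
  have Kp: "K powr p > 0" using K1 by simp
  have t0: "t > 0" unfolding t_def tK_def using Kp K_def by simp
  have tp: "t powr (p-1) = 1 / (4 * K powr p)"
    unfolding t_def tK_def K_def[symmetric] using p Kp by (simp add: powr_powr)
  have tpp: "t powr p = t / (4 * K powr p)"
    using powr_self_mult[of t p] t0 p tp by simp
  have rmeas: "r \<in> borel_measurable M" and rint: "integrable M (\<lambda>x. r x powr p)"
    using rm rnn unfolding memLp_def by auto
  have R0: "R \<ge> 0" unfolding R_def by (auto intro: integral_nonneg_AE)
  show ?thesis
  proof (cases "R = 0")
    case True
    show ?thesis
    proof (rule bexI[of _ "\<lambda>x. 0"])
      show "(\<lambda>x. 0) \<in> E" by (rule sub_const[OF sub])
      show "(AE x in M. 0 \<le> Re (0::complex))  \<and>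
        (\<integral>x. cmod (0::complex) powr p \<partial>M) \<le> (tK C0 p * (\<bar>C0\<bar>+1)) powr p * (\<integral>x. r x powr p \<partial>M) \<and>
        (\<integral>x. max 0 (r x - Re (0::complex)) powr p \<partial>M) \<le> (1 - tK C0 p / 4) * (\<integral>x. r x powr p \<partial>M) \<and>
        integrable M (\<lambda>x. max 0 (r x - Re (0::complex)) powr p)"
        using True rnn p rint unfolding R_def by simp
    qed
  next
    case False
    then have Rpos: "R > 0" using R0 by simp
    obtain w where wE: "\<forall>n. w n \<in> E" and wRe: "\<forall>n. AE x in M. 0 \<le> Re (w n x)"
      and wc: "weak_conv_Lp M p (\<lambda>n x. Re (w n x)) r"
      and wn: "\<forall>n. normLp M p (w n) \<le> C0 * normLp M p r"
      using ca rm rnn unfolding condition_alpha_def by blast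
    define g where "g x = r x powr (p-1)" for x
    have gm: "memLp M (p/(p-1)) g"
    proof -
      have "norm (g x) powr (p/(p-1)) = r x powr p" for x
        unfolding g_def using p rnn[of x] by (simp add: powr_powr)
      then show ?thesis unfolding memLp_def g_def using rmeas rint by simp
    qed
    have rg: "r x * g x = r x powr p" for x unfolding g_def using powr_self_mult[OF rnn p] .
    have "(\<lambda>n. \<integral>x. Re (w n x) * g x \<partial>M) \<longlonglongrightarrow> (\<integral>x. r x * g x \<partial>M)"
      using wc gm unfolding weak_conv_Lp_def by blast
    then have "(\<lambda>n. \<integral>x. Re (w n x) * g x \<partial>M) \<longlonglongrightarrow> R"
      unfolding rg R_def .
    from order_tendstoD(1)[OF this, of "R/2"] Rpos
    obtain n where n: "(\<integral>x. Re (w n x) * g x \<partial>M) > R/2"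
      by (auto simp: eventually_sequentially)
    obtain B where wm: "w n \<in> borel_measurable M" and wB: "AE x in M. cmod (w n x) \<le> B"
      using sub_linf[OF sub wE[rule_format, of n]] unfolding memLinf_def by blast
    have nr: "normLp M p r \<ge> 0" unfolding normLp_def by simp
    have "normLp M p (w n) \<le> K * normLp M p r"
      using wn[rule_format, of n] nr unfolding K_def
      by (smt (verit) mult_right_mono)
    from normLp_le_imp[OF _ _ this] p K1
    have wint: "(\<integral>x. cmod (w n x) powr p \<partial>M) \<le> K powr p * R"
      unfolding R_def using rnn by simp
    have iw: "integrable M (\<lambda>x. cmod (w n x) powr p)"
      by (rule integrable_const_bound[where B="B powr p"]) (use wB in \<open>eventually_elim, use p in \<open>auto intro: powr_mono2\<close>\<close>, use wm in measurable)
    have iag: "integrable M (\<lambda>x. Re (w n x) * g x)"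
    proof (rule Bochner_Integration.integrable_bound[where f="\<lambda>x. \<bar>B\<bar> * (1 + r x powr p)"])
      show "integrable M (\<lambda>x. \<bar>B\<bar> * (1 + r x powr p))" using rint by simp
      show "(\<lambda>x. Re (w n x) * g x) \<in> borel_measurable M" unfolding g_def using wm rmeas by measurable
      show "AE x in M. norm (Re (w n x) * g x) \<le> norm (\<bar>B\<bar> * (1 + r x powr p))"
        using wB
      proof eventually_elim
        case (elim x)
        have "\<bar>Re (w n x)\<bar> \<le> \<bar>B\<bar>" using elim abs_Re_le_cmod[of "w n x"] by linarith
        moreover have "0 \<le> g x" "g x \<le> 1 + r x powr p" unfolding g_def using rpow_bound[OF rnn p] by auto
        ultimately show ?case by (simp add: abs_mult mult_mono)
      qed
    qed
    define v where "v x = complex_of_real t * w n x" for x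
    have Rev: "Re (v x) = t * Re (w n x)" for x unfolding v_def by simp
    have cv: "cmod (v x) powr p = t powr p * cmod (w n x) powr p" for x
      unfolding v_def using t0 by (simp add: norm_mult powr_mult)
    show ?thesis
    proof (rule bexI[of _ v], intro conjI)
      show "v \<in> E" unfolding v_def by (rule sub_smult[OF sub wE[rule_format]])
      show "AE x in M. 0 \<le> Re (v x)" using wRe[rule_format, of n] by eventually_elim (use t0 in \<open>simp add: Rev\<close>)
      have "(\<integral>x. cmod (v x) powr p \<partial>M) = t powr p * (\<integral>x. cmod (w n x) powr p \<partial>M)"
        unfolding cv by simp
      also have "\<dots> \<le> t powr p * (K powr p * R)" using wint by (intro mult_left_mono) auto
      also have "\<dots> = (t * K) powr p * R" using t0 K1 by (simp add: powr_mult)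
      finally show "(\<integral>x. cmod (v x) powr p \<partial>M) \<le> (tK C0 p * (\<bar>C0\<bar>+1)) powr p * (\<integral>x. r x powr p \<partial>M)"
        unfolding t_def K_def R_def .
      have pw: "AE x in M. max 0 (r x - Re (v x)) powr p \<le>
          r x powr p - t * (Re (w n x) * g x) + t powr p * cmod (w n x) powr p"
        using wRe[rule_format, of n]
      proof eventually_elim
        case (elim x)
        have "max 0 (r x - t * Re (w n x)) powr p \<le> r x powr p - t * Re (w n x) * r x powr (p-1) + (t * cmod (w n x)) powr p"
          using t0 elim complex_Re_le_cmod[of "w n x"] by (intro pw_ineq[OF p rnn]) (auto intro: mult_left_mono)
        then show ?case unfolding Rev g_def using t0 by (simp add: powr_mult mult.assoc)
      qed
      have ilhs: "integrable M (\<lambda>x. max 0 (r x - Re (v x)) powr p)"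
      proof (rule Bochner_Integration.integrable_bound[OF rint])
        show "(\<lambda>x. max 0 (r x - Re (v x)) powr p) \<in> borel_measurable M"
          unfolding v_def using wm rmeas by measurable
        show "AE x in M. norm (max 0 (r x - Re (v x)) powr p) \<le> norm (r x powr p)"
          using wRe[rule_format, of n]
        proof eventually_elim
          case (elim x)
          have "max 0 (r x - Re (v x)) \<le> r x" using elim t0 rnn[of x] unfolding Rev by auto
          then have "max 0 (r x - Re (v x)) powr p \<le> r x powr p" using p by (intro powr_mono2) auto
          then show ?case by simp
        qed
      qed
      have "(\<integral>x. max 0 (r x - Re (v x)) powr p \<partial>M) \<le>
          (\<integral>x. r x powr p - t * (Re (w n x) * g x) + t powr p * cmod (w n x) powr p \<partial>M)"
        by (rule integral_mono_AE[OF ilhs _ pw]) (use rint iag iw in simp)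
      also have "\<dots> = R - t * (\<integral>x. Re (w n x) * g x \<partial>M) + t powr p * (\<integral>x. cmod (w n x) powr p \<partial>M)"
        unfolding R_def using rint iag iw by simp
      also have "\<dots> \<le> R - t * (R/2) + t powr p * (K powr p * R)"
        using n wint t0 by (smt (verit) mult_left_mono powr_ge_zero)
      also have "\<dots> = (1 - t/4) * R" using tpp Kp by (simp add: field_simps)
      finally show "(\<integral>x. max 0 (r x - Re (v x)) powr p \<partial>M) \<le> (1 - tK C0 p / 4) * (\<integral>x. r x powr p \<partial>M)"
        unfolding t_def R_def .
      show "integrable M (\<lambda>x. max 0 (r x - Re (v x)) powr p)" by (rule ilhs)
    qed
  qed
qed



lemma one_minus_exp_bound:
  fixes z :: complex
  assumes "0 \<le> Re z"
  shows "cmod (1 - exp (- z)) \<le> 3 * cmod z"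
proof -
  define x where "x = Re z"
  define y where "y = Im z"
  have e: "exp (- z) = complex_of_real (exp (- x)) * cis (- y)"
    unfolding x_def y_def by (simp add: exp_eq_polar)
  have "1 - exp (- z) = complex_of_real (1 - exp (- x)) + complex_of_real (exp (- x)) * (1 - cis (- y))"
    unfolding e by (simp add: algebra_simps)
  then have "cmod (1 - exp (- z)) \<le> cmod (complex_of_real (1 - exp (- x))) + cmod (complex_of_real (exp (- x)) * (1 - cis (- y)))"
    by (metis norm_triangle_ineq)
  also have "cmod (complex_of_real (1 - exp (- x))) = 1 - exp (- x)"
  proof -
    have "exp (- x) \<le> 1" using assms unfolding x_def by simp
    then show ?thesis by (subst norm_of_real) simp
  qed
  also have "1 - exp (- x) \<le> x" using exp_ge_add_one_self[of "- x"] by simp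
  also have "cmod (complex_of_real (exp (- x)) * (1 - cis (- y))) \<le> 1 * cmod (1 - cis (- y))"
    unfolding norm_mult using assms unfolding x_def by (intro mult_right_mono) auto
  also have "cmod (1 - cis (- y)) \<le> \<bar>1 - cos y\<bar> + \<bar>sin y\<bar>"
  proof -
    have eq: "1 - cis (- y) = complex_of_real (1 - cos y) + \<i> * complex_of_real (sin y)"
      by (simp add: complex_eq_iff)
    have "cmod (1 - cis (- y)) \<le> cmod (complex_of_real (1 - cos y)) + cmod (\<i> * complex_of_real (sin y))"
      unfolding eq by (rule norm_triangle_ineq)
    also have "\<dots> = \<bar>1 - cos y\<bar> + \<bar>sin y\<bar>" by (simp only: norm_of_real norm_mult norm_ii mult_1 real_norm_def)
    finally show ?thesis .
  qed
  also have "\<bar>1 - cos y\<bar> \<le> \<bar>y\<bar>"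
  proof -
    have "cos y = cos (2 * (y/2))" by simp
    also have "\<dots> = 1 - 2 * (sin (y/2))^2" by (rule cos_double_sin)
    finally have "\<bar>1 - cos y\<bar> = 2 * (sin (y/2))^2" by simp
    also have "\<dots> \<le> 2 * \<bar>sin (y/2)\<bar>"
    proof -
      have "\<bar>sin (y/2)\<bar> \<le> 1" by simp
      then have "\<bar>sin (y/2)\<bar> * \<bar>sin (y/2)\<bar> \<le> \<bar>sin (y/2)\<bar> * 1" by (intro mult_left_mono) auto
      then have "(sin (y/2))^2 \<le> \<bar>sin (y/2)\<bar>"
        by (simp add: abs_mult_self_eq power2_eq_square)
      then show ?thesis by simp
    qed
    also have "\<dots> \<le> \<bar>y\<bar>" using abs_sin_x_le_abs_x[of "y/2"] by simp
    finally show ?thesis .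
  qed
  also have "\<bar>sin y\<bar> \<le> \<bar>y\<bar>" by (rule abs_sin_x_le_abs_x)
  finally have "cmod (1 - exp (- z)) \<le> x + 2 * \<bar>y\<bar>" by simp
  also have "\<dots> \<le> 3 * cmod z"
    using abs_Re_le_cmod[of z] abs_Im_le_cmod[of z] unfolding x_def y_def by linarith
  finally show ?thesis .
qed

lemma AE_summable_nonneg:
  fixes q :: "nat \<Rightarrow> 'a \<Rightarrow> real"
  assumes int: "\<And>k. integrable M (q k)" and nn: "\<And>k x. 0 \<le> q k x"
    and sm: "summable (\<lambda>k. \<integral>x. q k x \<partial>M)"
  shows "AE x in M. summable (\<lambda>k. q k x)"
proof -
  have meas: "\<And>k. q k \<in> borel_measurable M" using int by auto
  have "(\<integral>\<^sup>+ x. (\<Sum>k. ennreal (q k x)) \<partial>M) = (\<Sum>k. \<integral>\<^sup>+ x. ennreal (q k x) \<partial>M)"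
    using meas by (intro nn_integral_suminf) auto
  also have "\<dots> = (\<Sum>k. ennreal (\<integral>x. q k x \<partial>M))"
    using int nn by (intro arg_cong[where f=suminf] ext nn_integral_eq_integral) auto
  also have "\<dots> = ennreal (\<Sum>k. \<integral>x. q k x \<partial>M)"
    using sm nn by (intro suminf_ennreal2) (auto intro: integral_nonneg_AE)
  finally have "(\<integral>\<^sup>+ x. (\<Sum>k. ennreal (q k x)) \<partial>M) \<noteq> \<infinity>" by simp
  then have "AE x in M. (\<Sum>k. ennreal (q k x)) \<noteq> \<infinity>"
    using meas by (intro nn_integral_noteq_infinite) auto
  then show ?thesis
    by eventually_elim (rule summable_suminf_not_top, use nn in auto)
qed



lemma pow_powr_swap: "0 < (r::real) \<Longrightarrow> (r^k) powr a = (r powr a)^k"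
  by (simp add: powr_realpow[symmetric] powr_powr powr_power mult.commute)

definition thK :: "real \<Rightarrow> real \<Rightarrow> real" where "thK C0 p = 1 - tK C0 p / 4"
definition rhoK :: "real \<Rightarrow> real \<Rightarrow> real" where "rhoK C0 p = sqrt (thK C0 p)"
definition etaK :: "real \<Rightarrow> real \<Rightarrow> real" where "etaK C0 p = rhoK C0 p powr (1/p)"
definition AK :: "real \<Rightarrow> real \<Rightarrow> real" where "AK C0 p = (tK C0 p * (\<bar>C0\<bar>+1)) powr p"
definition Dc :: "real \<Rightarrow> real \<Rightarrow> real \<Rightarrow> real" where
  "Dc C0 p g = (3*g/(1 - etaK C0 p)) powr p * (AK C0 p / (1 - rhoK C0 p))"

lemma params:
  assumes p: "1 < p"
  shows "0 < tK C0 p" "tK C0 p \<le> 1" "0 < thK C0 p" "thK C0 p < 1" "0 < rhoK C0 p" "rhoK C0 p < 1"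
    "0 < etaK C0 p" "etaK C0 p < 1" "0 \<le> AK C0 p" "thK C0 p = rhoK C0 p * rhoK C0 p"
proof -
  have K: "(\<bar>C0\<bar>+1) powr p \<ge> 1" using p by (intro ge_one_powr_ge_zero) auto
  then have b: "0 < 1 / (4 * (\<bar>C0\<bar>+1) powr p)" "1 / (4 * (\<bar>C0\<bar>+1) powr p) \<le> 1" by auto
  show t0: "0 < tK C0 p" unfolding tK_def using b by simp
  have "tK C0 p \<le> 1 powr (1/(p-1))" unfolding tK_def using b p by (intro powr_mono2) auto
  then show t1: "tK C0 p \<le> 1" by simp
  show th0: "0 < thK C0 p" "thK C0 p < 1" unfolding thK_def using t0 t1 by auto
  then show r0: "0 < rhoK C0 p" "rhoK C0 p < 1" unfolding rhoK_def by auto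
  show "0 < etaK C0 p" unfolding etaK_def using r0 by simp
  have "etaK C0 p < 1 powr (1/p)" unfolding etaK_def using r0 p by (intro powr_less_mono2) auto
  then show "etaK C0 p < 1" by simp
  show "0 \<le> AK C0 p" unfolding AK_def by simp
  show "thK C0 p = rhoK C0 p * rhoK C0 p" unfolding rhoK_def using th0 by simp
qed

primrec Sq :: "(('a \<Rightarrow> real) \<Rightarrow> 'a \<Rightarrow> complex) \<Rightarrow> ('a \<Rightarrow> real) \<Rightarrow> nat \<Rightarrow> 'a \<Rightarrow> complex" where
  "Sq f u 0 = (\<lambda>x. 0)"
| "Sq f u (Suc k) = (\<lambda>x. Sq f u k x + f (\<lambda>y. max 0 (u y - Re (Sq f u k y))) x)"

lemma main_construct:
  fixes M :: "'a measure" and E :: "('a \<Rightarrow> complex) set" and u :: "'a \<Rightarrow> real" and g :: real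
  assumes fm: "finite_measure M" and sub: "Linf_subalgebra_with_constants M E"
    and ws: "weak_star_closed M E" and p: "1 < p" and ca: "condition_alpha M p C0 E"
    and g0: "0 \<le> g" and um: "memLp M p u" and unn: "\<And>x. 0 \<le> u x"
  shows "\<exists>\<Phi>\<in>E. (\<integral>x. cmod (1 - \<Phi> x) powr p \<partial>M) \<le> Dc C0 p g * (\<integral>x. u x powr p \<partial>M) \<and>
           (AE x in M. cmod (\<Phi> x) \<le> exp (- g * u x))"
proof -
  interpret finite_measure M by fact
  define \<theta> where "\<theta> = thK C0 p"
  define \<rho> where "\<rho> = rhoK C0 p"
  define \<eta> where "\<eta> = etaK C0 p"
  define A where "A = AK C0 p"
  define U where "U = (\<integral>x. u x powr p \<partial>M)"
  note pr = params[OF p, of C0, folded \<theta>_def \<rho>_def \<eta>_def A_def]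
  have umeas: "u \<in> borel_measurable M" and uint: "integrable M (\<lambda>x. u x powr p)"
    using um unn unfolding memLp_def by auto
  have U0: "U \<ge> 0" unfolding U_def by (auto intro: integral_nonneg_AE)
  have "\<forall>r. \<exists>v. (memLp M p r \<and> (\<forall>x. 0 \<le> r x)) \<longrightarrow>
      (v \<in> E \<and> (AE x in M. 0 \<le> Re (v x)) \<and>
       (\<integral>x. cmod (v x) powr p \<partial>M) \<le> A * (\<integral>x. r x powr p \<partial>M) \<and>
       (\<integral>x. max 0 (r x - Re (v x)) powr p \<partial>M) \<le> \<theta> * (\<integral>x. r x powr p \<partial>M) \<and>
       integrable M (\<lambda>x. max 0 (r x - Re (v x)) powr p))"
  proof
    fix r :: "'a \<Rightarrow> real"
    show "\<exists>v. (memLp M p r \<and> (\<forall>x. 0 \<le> r x)) \<longrightarrow>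
      (v \<in> E \<and> (AE x in M. 0 \<le> Re (v x)) \<and>
       (\<integral>x. cmod (v x) powr p \<partial>M) \<le> A * (\<integral>x. r x powr p \<partial>M) \<and>
       (\<integral>x. max 0 (r x - Re (v x)) powr p \<partial>M) \<le> \<theta> * (\<integral>x. r x powr p \<partial>M) \<and>
       integrable M (\<lambda>x. max 0 (r x - Re (v x)) powr p))"
    proof (cases "memLp M p r \<and> (\<forall>x. 0 \<le> r x)")
      case True
      then obtain w where "w \<in> E" and w: "(AE x in M. 0 \<le> Re (w x)) \<and>
     (\<integral>x. cmod (w x) powr p \<partial>M) \<le> (tK C0 p * (\<bar>C0\<bar>+1)) powr p * (\<integral>x. r x powr p \<partial>M) \<and>
     (\<integral>x. max 0 (r x - Re (w x)) powr p \<partial>M) \<le> (1 - tK C0 p / 4) * (\<integral>x. r x powr p \<partial>M) \<and>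
     integrable M (\<lambda>x. max 0 (r x - Re (w x)) powr p)"
        using step[OF fm sub p ca, of r] by auto
      show ?thesis
        by (rule exI[of _ w]) (use \<open>w \<in> E\<close> w in \<open>simp add: A_def AK_def \<theta>_def thK_def\<close>)
    next
      case False
      then show ?thesis by blast
    qed
  qed
  from choice[OF this] obtain f where f0: "\<forall>r. (memLp M p r \<and> (\<forall>x. 0 \<le> r x)) \<longrightarrow>
      (f r \<in> E \<and> (AE x in M. 0 \<le> Re (f r x)) \<and>
       (\<integral>x. cmod (f r x) powr p \<partial>M) \<le> A * (\<integral>x. r x powr p \<partial>M) \<and>
       (\<integral>x. max 0 (r x - Re (f r x)) powr p \<partial>M) \<le> \<theta> * (\<integral>x. r x powr p \<partial>M) \<and>
       integrable M (\<lambda>x. max 0 (r x - Re (f r x)) powr p))" by blast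
  have f: "\<And>r. memLp M p r \<Longrightarrow> (\<forall>x. 0 \<le> r x) \<Longrightarrow>
      (f r \<in> E \<and> (AE x in M. 0 \<le> Re (f r x)) \<and>
       (\<integral>x. cmod (f r x) powr p \<partial>M) \<le> A * (\<integral>x. r x powr p \<partial>M) \<and>
       (\<integral>x. max 0 (r x - Re (f r x)) powr p \<partial>M) \<le> \<theta> * (\<integral>x. r x powr p \<partial>M) \<and>
       integrable M (\<lambda>x. max 0 (r x - Re (f r x)) powr p))"
    using f0 by blast
  define S where "S = Sq f u"
  define res where "res k = (\<lambda>y. max 0 (u y - Re (S k y)))" for k
  define v where "v k = f (res k)" for k
  have S0: "S 0 = (\<lambda>x. 0)" unfolding S_def by simp
  have SS: "S (Suc k) = (\<lambda>x. S k x + v k x)" for k unfolding S_def v_def res_def by simp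
  have resnn: "0 \<le> res k x" for k x unfolding res_def by simp
  have Smeas: "S k \<in> E \<Longrightarrow> S k \<in> borel_measurable M" for k
    using sub_linf[OF sub] unfolding memLinf_def by blast
  have inv: "S k \<in> E \<and> (AE x in M. 0 \<le> Re (S k x)) \<and> memLp M p (res k) \<and>
      (\<integral>x. res k x powr p \<partial>M) \<le> \<theta>^k * U" for k
  proof (induction k)
    case 0
    have r0: "res 0 = u" unfolding res_def S0 using unn by (simp add: max_absorb2)
    show ?case unfolding r0 S0 U_def using um sub_const[OF sub] by simp
  next
    case (Suc k)
    then have IH: "S k \<in> E" "AE x in M. 0 \<le> Re (S k x)" "memLp M p (res k)"
      "(\<integral>x. res k x powr p \<partial>M) \<le> \<theta>^k * U" by auto
    note fk = f[OF IH(3), folded v_def, OF allI[OF resnn]]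
    have SE: "S (Suc k) \<in> E" unfolding SS using sub_add[OF sub IH(1)] fk by blast
    have SRe: "AE x in M. 0 \<le> Re (S (Suc k) x)" using IH(2) conjunct1[OF conjunct2[OF fk]] unfolding SS
      by eventually_elim simp
    have rmeas: "res (Suc k) \<in> borel_measurable M"
      unfolding res_def using Smeas[OF SE] umeas by measurable
    have rint: "integrable M (\<lambda>x. res (Suc k) x powr p)"
    proof (rule Bochner_Integration.integrable_bound[OF uint])
      show "(\<lambda>x. res (Suc k) x powr p) \<in> borel_measurable M" using rmeas by measurable
      show "AE x in M. norm (res (Suc k) x powr p) \<le> norm (u x powr p)"
        using SRe
      proof eventually_elim
        case (elim x)
        have "res (Suc k) x \<le> u x" unfolding res_def using elim unn[of x] by auto
        then show ?case using resnn p by (auto intro: powr_mono2)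
      qed
    qed
    have mem: "memLp M p (res (Suc k))" unfolding memLp_def using rmeas rint resnn by simp
    have "(\<integral>x. res (Suc k) x powr p \<partial>M) \<le> (\<integral>x. max 0 (res k x - Re (v k x)) powr p \<partial>M)"
    proof (rule integral_mono)
      show "integrable M (\<lambda>x. res (Suc k) x powr p)" by (rule rint)
      show "integrable M (\<lambda>x. max 0 (res k x - Re (v k x)) powr p)" using fk by blast
      fix x
      have le: "res (Suc k) x \<le> max 0 (res k x - Re (v k x))" unfolding res_def SS by auto
      show "res (Suc k) x powr p \<le> max 0 (res k x - Re (v k x)) powr p"
        by (rule powr_mono2) (use p resnn le in auto)
    qed
    also have "\<dots> \<le> \<theta> * (\<integral>x. res k x powr p \<partial>M)" using fk by blast
    also have "\<dots> \<le> \<theta> * (\<theta>^k * U)" using IH(4) pr by (intro mult_left_mono) auto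
    finally show ?case using SE SRe mem by simp
  qed
  have vE: "v k \<in> E" and vRe: "AE x in M. 0 \<le> Re (v k x)"
    and vint0: "(\<integral>x. cmod (v k x) powr p \<partial>M) \<le> A * (\<integral>x. res k x powr p \<partial>M)" for k
    using f[OF conjunct1[OF conjunct2[OF conjunct2[OF inv]]], folded v_def, OF allI[OF resnn]] by auto
  have vint: "(\<integral>x. cmod (v k x) powr p \<partial>M) \<le> A * (\<theta>^k * U)" for k
  proof -
    have "A * (\<integral>x. res k x powr p \<partial>M) \<le> A * (\<theta>^k * U)"
      using inv[of k] pr by (intro mult_left_mono) auto
    then show ?thesis using vint0[of k] by linarith
  qed
  have vmeas: "v k \<in> borel_measurable M" for k using sub_linf[OF sub vE] unfolding memLinf_def by blast

  have viint: "integrable M (\<lambda>x. cmod (v k x) powr p)" for k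
  proof -
    obtain B where "AE x in M. cmod (v k x) \<le> B" using sub_linf[OF sub vE] unfolding memLinf_def by blast
    then show ?thesis
      by (intro integrable_const_bound[where B="B powr p"]) (use vmeas p in \<open>auto elim!: eventually_mono intro: powr_mono2\<close>)
  qed
  have eta_eq: "\<eta> = \<rho> powr (1/p)" unfolding \<eta>_def \<rho>_def etaK_def ..
  have th_eq: "\<theta> = \<rho> * \<rho>" using pr by simp
  define q where "q k x = cmod (v k x) powr p / \<rho>^k" for k x
  have qnn: "0 \<le> q k x" for k x unfolding q_def using pr by simp
  have qn: "norm (q k x) = q k x" for k x using qnn[of k x] by simp
  have qint: "integrable M (q k)" for k unfolding q_def using viint[of k] by simp
  have qI: "(\<integral>x. q k x \<partial>M) \<le> A * U * \<rho>^k" for k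
  proof -
    have "(\<integral>x. q k x \<partial>M) = (\<integral>x. cmod (v k x) powr p \<partial>M) / \<rho>^k" unfolding q_def by simp
    also have "\<dots> \<le> A * (\<theta>^k * U) / \<rho>^k" using vint[of k] pr by (intro divide_right_mono) auto
    also have "\<dots> = A * U * \<rho>^k" unfolding th_eq power_mult_distrib using pr by (simp add: field_simps)
    finally show ?thesis .
  qed
  have gs: "summable (\<lambda>k. A * U * \<rho>^k)" using pr by (intro summable_mult summable_geometric) auto
  have qsum: "summable (\<lambda>k. \<integral>x. q k x \<partial>M)"
    by (rule summable_comparison_test[OF _ gs]) (use qI qnn in \<open>auto intro!: exI[of _ 0] integral_nonneg_AE\<close>)
  have AEq: "AE x in M. summable (\<lambda>k. q k x)" by (rule AE_summable_nonneg[OF qint qnn qsum])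
  have Qint: "integrable M (\<lambda>x. \<Sum>k. q k x)" and QI: "(\<integral>x. (\<Sum>k. q k x) \<partial>M) = (\<Sum>k. \<integral>x. q k x \<partial>M)"
    using integrable_suminf[of M q] integral_suminf[of M q] qint AEq qsum unfolding qn by auto
  have Qbound: "(\<Sum>k. \<integral>x. q k x \<partial>M) \<le> A * U / (1 - \<rho>)"
  proof -
    have "(\<Sum>k. \<integral>x. q k x \<partial>M) \<le> (\<Sum>k. A * U * \<rho>^k)" by (rule suminf_le[OF qI qsum gs])
    also have "\<dots> = A * U * (1 / (1 - \<rho>))" using pr by (simp add: suminf_mult suminf_geometric)
    finally show ?thesis by simp
  qed
  have resint: "integrable M (\<lambda>x. res k x powr p)" for k
    using inv[of k] resnn unfolding memLp_def by simp
  have AEr: "AE x in M. summable (\<lambda>k. res k x powr p)"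
  proof (rule AE_summable_nonneg[OF resint])
    show "0 \<le> res k x powr p" for k x by simp
    have gs2: "summable (\<lambda>k. \<theta>^k * U)" using pr by (intro summable_mult2 summable_geometric) auto
    show "summable (\<lambda>k. \<integral>x. res k x powr p \<partial>M)"
      by (rule summable_comparison_test[OF _ gs2]) (use inv in \<open>auto intro!: exI[of _ 0] integral_nonneg_AE\<close>)
  qed
  have AEv: "AE x in M. \<forall>k. 0 \<le> Re (v k x)" using vRe by (simp add: AE_all_countable)
  define V where "V x = (\<Sum>k. v k x)" for x
  define \<Phi> where "\<Phi> x = exp (- (complex_of_real g * V x))" for x
  define P where "P k x = exp (- (complex_of_real g * S k x))" for k x
  have Ssum: "S k x = (\<Sum>j<k. v j x)" for k x by (induction k) (simp_all add: S0 SS)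
  have good: "(\<lambda>k. P k x) \<longlonglongrightarrow> \<Phi> x \<and> cmod (\<Phi> x) \<le> 1 \<and> cmod (\<Phi> x) \<le> exp (- g * u x) \<and>
     cmod (1 - \<Phi> x) powr p \<le> (3*g/(1-\<eta>)) powr p * (\<Sum>k. q k x)"
    if hv: "\<forall>k. 0 \<le> Re (v k x)" and hq: "summable (\<lambda>k. q k x)" and hr: "summable (\<lambda>k. res k x powr p)" for x
  proof -
    define Q where "Q = (\<Sum>k. q k x)"
    have Q0: "Q \<ge> 0" unfolding Q_def by (rule suminf_nonneg[OF hq qnn])
    have qle: "q k x \<le> Q" for k using sum_le_suminf[OF hq, of "{k}"] qnn unfolding Q_def by simp
    have vle: "cmod (v k x) \<le> \<eta>^k * Q powr (1/p)" for k
    proof -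
      have rk: "\<rho>^k > 0" using pr by simp
      have a: "cmod (v k x) powr p \<le> \<rho>^k * Q" using qle[of k] rk unfolding q_def by (simp add: pos_divide_le_eq mult.commute)
      have "cmod (v k x) = (cmod (v k x) powr p) powr (1/p)" using p by (simp add: powr_powr)
      also have "\<dots> \<le> (\<rho>^k * Q) powr (1/p)" using a p by (intro powr_mono2) auto
      also have "\<dots> = (\<rho>^k) powr (1/p) * Q powr (1/p)" using rk Q0 by (simp add: powr_mult)
      also have "\<dots> = \<eta>^k * Q powr (1/p)" unfolding eta_eq using pr by (simp add: pow_powr_swap)
      finally show ?thesis .
    qed
    have gsum: "summable (\<lambda>k. \<eta>^k * Q powr (1/p))" using pr by (intro summable_mult2 summable_geometric) auto
    have vsum: "summable (\<lambda>k. cmod (v k x))"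
      by (rule summable_comparison_test[OF _ gsum]) (use vle in auto)
    have "cmod (V x) \<le> (\<Sum>k. cmod (v k x))" unfolding V_def by (rule summable_norm[OF vsum])
    also have "\<dots> \<le> (\<Sum>k. \<eta>^k * Q powr (1/p))" by (rule suminf_le[OF vle vsum gsum])
    also have "\<dots> = Q powr (1/p) / (1 - \<eta>)" using pr by (simp add: suminf_mult2[symmetric] suminf_geometric)
    finally have Vle: "cmod (V x) \<le> Q powr (1/p) / (1 - \<eta>)" .
    have vs: "summable (\<lambda>k. v k x)" by (rule summable_norm_cancel[OF vsum])
    have SV: "(\<lambda>k. S k x) \<longlonglongrightarrow> V x" unfolding Ssum V_def by (rule summable_LIMSEQ[OF vs])
    have ReV: "0 \<le> Re (V x)"
    proof (rule LIMSEQ_le_const[OF tendsto_Re[OF SV]])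
      show "\<exists>N. \<forall>n\<ge>N. 0 \<le> Re (S n x)" using hv by (auto simp: Ssum Re_sum intro!: sum_nonneg)
    qed
    have PPhi: "(\<lambda>k. P k x) \<longlonglongrightarrow> \<Phi> x" unfolding P_def \<Phi>_def by (intro tendsto_intros SV)
    have nPhi: "cmod (\<Phi> x) = exp (- g * Re (V x))" unfolding \<Phi>_def by simp
    have rlim: "(\<lambda>k. res k x) \<longlonglongrightarrow> max 0 (u x - Re (V x))" unfolding res_def by (intro tendsto_intros SV)
    have r0: "(\<lambda>k. res k x powr p) \<longlonglongrightarrow> 0" by (rule summable_LIMSEQ_zero[OF hr])
    have m0: "max 0 (u x - Re (V x)) = 0"
    proof (rule ccontr)
      define m where "m = max 0 (u x - Re (V x))"
      assume "max 0 (u x - Re (V x)) \<noteq> 0"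
      then have mpos: "m > 0" unfolding m_def by auto
      have mp: "(m/2) powr p > 0" using mpos by simp
      have "eventually (\<lambda>k. m/2 < res k x) sequentially"
        using order_tendstoD(1)[OF rlim[folded m_def], of "m/2"] mpos by simp
      moreover have "eventually (\<lambda>k. res k x powr p < (m/2) powr p) sequentially"
        using order_tendstoD(2)[OF r0 mp] .
      ultimately have "eventually (\<lambda>k. m/2 < res k x \<and> res k x powr p < (m/2) powr p) sequentially"
        by (rule eventually_conj)
      then obtain k where k: "m/2 < res k x" "res k x powr p < (m/2) powr p"
        by (auto simp: eventually_sequentially)
      have "(m/2) powr p \<le> res k x powr p" using k(1) mpos p by (intro powr_mono2) auto
      with k(2) show False by simp
    qed
    then have uV: "u x \<le> Re (V x)" by simp
    have "cmod (\<Phi> x) \<le> exp (- g * u x)" unfolding nPhi using uV g0 by (simp add: mult_left_mono)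
    moreover have "cmod (\<Phi> x) \<le> 1" unfolding nPhi using ReV g0 by simp
    moreover have "cmod (1 - \<Phi> x) powr p \<le> (3*g/(1-\<eta>)) powr p * Q"
    proof -
      have "cmod (1 - \<Phi> x) \<le> 3 * cmod (complex_of_real g * V x)"
        unfolding \<Phi>_def by (rule one_minus_exp_bound) (use ReV g0 in simp)
      also have "\<dots> = 3 * g * cmod (V x)" using g0 by (simp add: norm_mult)
      also have "\<dots> \<le> 3 * g * (Q powr (1/p) / (1 - \<eta>))" using Vle g0 by (intro mult_left_mono) auto
      also have "\<dots> = (3*g/(1-\<eta>)) * Q powr (1/p)" by simp
      finally have b: "cmod (1 - \<Phi> x) \<le> (3*g/(1-\<eta>)) * Q powr (1/p)" .
      have "cmod (1 - \<Phi> x) powr p \<le> ((3*g/(1-\<eta>)) * Q powr (1/p)) powr p"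
        using b p by (intro powr_mono2) auto
      also have "\<dots> = (3*g/(1-\<eta>)) powr p * (Q powr (1/p)) powr p"
        by (rule powr_mult)
      also have "(Q powr (1/p)) powr p = Q" using Q0 p by (simp add: powr_powr)
      finally show ?thesis .
    qed
    ultimately show ?thesis using PPhi unfolding Q_def by blast
  qed
  have AEgood: "AE x in M. (\<lambda>k. P k x) \<longlonglongrightarrow> \<Phi> x \<and> cmod (\<Phi> x) \<le> 1 \<and> cmod (\<Phi> x) \<le> exp (- g * u x) \<and>
     cmod (1 - \<Phi> x) powr p \<le> (3*g/(1-\<eta>)) powr p * (\<Sum>k. q k x)"
    using AEv AEq AEr by eventually_elim (rule good)
  have Phimeas: "\<Phi> \<in> borel_measurable M" unfolding \<Phi>_def V_def using vmeas by measurable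
  have PhiE: "\<Phi> \<in> E"
  proof (rule E_closed_bdd_lim[OF fm ws, where F=P and B=1])
    show "P k \<in> E" for k
    proof -
      have "(\<lambda>x. (- complex_of_real g) * S k x) \<in> E" using sub_smult[OF sub] inv by blast
      from sub_exp[OF fm sub ws this] show ?thesis unfolding P_def by simp
    qed
    show "P k \<in> borel_measurable M" for k using Smeas[OF conjunct1[OF inv[of k]]] unfolding P_def by measurable
    show "AE x in M. cmod (P k x) \<le> 1" for k
      using inv[of k] unfolding P_def by (auto elim!: eventually_mono simp: g0)
    show "AE x in M. (\<lambda>k. P k x) \<longlonglongrightarrow> \<Phi> x" using AEgood by (auto elim!: eventually_mono)
    show "\<Phi> \<in> borel_measurable M" by (rule Phimeas)
    show "AE x in M. cmod (\<Phi> x) \<le> 1" using AEgood by (auto elim!: eventually_mono)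
  qed
  have i1: "integrable M (\<lambda>x. cmod (1 - \<Phi> x) powr p)"
  proof (rule integrable_const_bound[where B="2 powr p"])
    show "AE x in M. norm (cmod (1 - \<Phi> x) powr p) \<le> 2 powr p" using AEgood
    proof eventually_elim
      case (elim x)
      have "cmod (1 - \<Phi> x) \<le> 2" using elim norm_triangle_ineq4[of 1 "\<Phi> x"] by simp
      then show ?case using p by (simp add: powr_mono2)
    qed
    show "(\<lambda>x. cmod (1 - \<Phi> x) powr p) \<in> borel_measurable M" using Phimeas by measurable
  qed
  have c0: "(3*g/(1-\<eta>)) powr p \<ge> 0" by simp
  have "(\<integral>x. cmod (1 - \<Phi> x) powr p \<partial>M) \<le> (\<integral>x. (3*g/(1-\<eta>)) powr p * (\<Sum>k. q k x) \<partial>M)"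
    by (rule integral_mono_AE[OF i1]) (use Qint AEgood in \<open>auto elim!: eventually_mono\<close>)
  also have "\<dots> = (3*g/(1-\<eta>)) powr p * (\<Sum>k. \<integral>x. q k x \<partial>M)" using QI by simp
  also have "\<dots> \<le> (3*g/(1-\<eta>)) powr p * (A * U / (1 - \<rho>))" using Qbound c0 by (rule mult_left_mono)
  also have "\<dots> = Dc C0 p g * U" unfolding Dc_def \<eta>_def[symmetric] \<rho>_def[symmetric] A_def[symmetric] by simp
  finally have "(\<integral>x. cmod (1 - \<Phi> x) powr p \<partial>M) \<le> Dc C0 p g * (\<integral>x. u x powr p \<partial>M)" unfolding U_def .
  moreover have "AE x in M. cmod (\<Phi> x) \<le> exp (- g * u x)" using AEgood by (auto elim!: eventually_mono)
  ultimately show ?thesis using PhiE by blast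
qed



lemma exp_bound_phi:
  fixes y :: real
  assumes "1 \<le> y"
  shows "exp (- real n * max 0 (y - 1)) \<le> 1 / \<bar>y\<bar>^n"
proof -
  have "y \<le> exp (y - 1)" using exp_ge_add_one_self[of "y - 1"] by simp
  then have "y^n \<le> exp (y - 1)^n" using assms by (intro power_mono) auto
  also have "\<dots> = exp (real n * (y - 1))" by (simp add: exp_of_nat_mult)
  finally have a: "y^n \<le> exp (real n * (y - 1))" .
  have yp: "0 < y^n" using assms by simp
  have m: "- real n * max 0 (y - 1) = - (real n * (y - 1))" using assms by simp
  have "exp (- real n * max 0 (y - 1)) = 1 / exp (real n * (y - 1))"
    unfolding m exp_minus by (simp add: inverse_eq_divide)
  also have "\<dots> \<le> 1 / y^n" using a yp by (intro divide_left_mono) auto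
  also have "\<dots> = 1 / \<bar>y\<bar>^n" using assms by simp
  finally show ?thesis .
qed

lemma Dc_nonneg: "1 < p \<Longrightarrow> 0 \<le> Dc C0 p g"
  unfolding Dc_def using params[of p C0] by (intro mult_nonneg_nonneg divide_nonneg_nonneg) auto

theorem lemma2:
  fixes p :: real and \<gamma> :: nat and C0 :: real
  assumes "1 < p" and "2 \<le> \<gamma>"
  shows "\<exists>C::real. \<forall>(M::'a measure) (E::('a \<Rightarrow> complex) set).
           finite_measure M \<longrightarrow>
           Linf_subalgebra_with_constants M E \<longrightarrow>
           weak_star_closed M E \<longrightarrow>
           condition_alpha M p C0 E \<longrightarrow>
           (\<forall>\<phi>::'a \<Rightarrow> real. memLp M p \<phi> \<and> (AE x in M. 1 \<le> \<phi> x) \<longrightarrow>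
              (\<exists>\<Phi>\<in>E.
                 normLp M p (\<lambda>x. 1 - \<Phi> x) \<le> C * normLp M p (\<lambda>x. 1 - \<phi> x) \<and>
                 (AE x in M. cmod (\<Phi> x) \<le> 1 / \<bar>\<phi> x\<bar> ^ \<gamma>)))"
proof (intro exI allI impI)
  note p = assms(1)
  define D where "D = Dc C0 p (real \<gamma>)"
  have D0: "0 \<le> D" unfolding D_def using Dc_nonneg[OF p] .
  fix M :: "'a measure" and E :: "('a \<Rightarrow> complex) set" and \<phi> :: "'a \<Rightarrow> real"
  assume fm: "finite_measure M" and sub: "Linf_subalgebra_with_constants M E"
    and ws: "weak_star_closed M E" and ca: "condition_alpha M p C0 E"
    and ph: "memLp M p \<phi> \<and> (AE x in M. 1 \<le> \<phi> x)"
  then have phm: "\<phi> \<in> borel_measurable M" and phi: "integrable M (\<lambda>x. norm (\<phi> x) powr p)"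
    and ph1: "AE x in M. 1 \<le> \<phi> x" unfolding memLp_def by auto
  define u where "u x = max 0 (\<phi> x - 1)" for x
  have unn: "0 \<le> u x" for x unfolding u_def by simp
  have um: "memLp M p u"
  proof -
    have umeas: "u \<in> borel_measurable M" unfolding u_def using phm by measurable
    have "integrable M (\<lambda>x. norm (u x) powr p)"
    proof (rule Bochner_Integration.integrable_bound[OF phi])
      show "(\<lambda>x. norm (u x) powr p) \<in> borel_measurable M" using umeas by measurable
      show "AE x in M. norm (norm (u x) powr p) \<le> norm (norm (\<phi> x) powr p)"
      proof (rule AE_I2)
        fix x
        have "norm (u x) \<le> norm (\<phi> x)" unfolding u_def by auto
        then have "norm (u x) powr p \<le> norm (\<phi> x) powr p" by (rule powr_mono2[rotated 2]) (use p in auto)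
        then show "norm (norm (u x) powr p) \<le> norm (norm (\<phi> x) powr p)" by simp
      qed
    qed
    then show ?thesis unfolding memLp_def using umeas by simp
  qed
  obtain \<Phi> where PhiE: "\<Phi> \<in> E"
    and I: "(\<integral>x. cmod (1 - \<Phi> x) powr p \<partial>M) \<le> D * (\<integral>x. u x powr p \<partial>M)"
    and B: "AE x in M. cmod (\<Phi> x) \<le> exp (- real \<gamma> * u x)"
    using main_construct[OF fm sub ws p ca _ um unn, of "real \<gamma>"] unfolding D_def by auto
  have equ: "(\<integral>x. u x powr p \<partial>M) = (\<integral>x. norm (1 - \<phi> x) powr p \<partial>M)"
  proof (rule integral_cong_AE)
    show "(\<lambda>x. u x powr p) \<in> borel_measurable M" unfolding u_def using phm by measurable
    show "(\<lambda>x. norm (1 - \<phi> x) powr p) \<in> borel_measurable M" using phm by measurable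
    show "AE x in M. u x powr p = norm (1 - \<phi> x) powr p"
      using ph1 by eventually_elim (simp add: u_def)
  qed
  have Dp: "(D powr (1/p)) powr p = D" using D0 p by (simp add: powr_powr)
  show "\<exists>\<Phi>\<in>E. normLp M p (\<lambda>x. 1 - \<Phi> x) \<le> D powr (1/p) * normLp M p (\<lambda>x. 1 - \<phi> x) \<and>
                 (AE x in M. cmod (\<Phi> x) \<le> 1 / \<bar>\<phi> x\<bar> ^ \<gamma>)"
  proof (rule bexI[OF conjI PhiE])
    show "normLp M p (\<lambda>x. 1 - \<Phi> x) \<le> D powr (1/p) * normLp M p (\<lambda>x. 1 - \<phi> x)"
      by (rule imp_normLp_le) (use p I equ Dp in auto)
    show "AE x in M. cmod (\<Phi> x) \<le> 1 / \<bar>\<phi> x\<bar> ^ \<gamma>"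
      using B ph1
    proof eventually_elim
      case (elim x)
      then show ?case using exp_bound_phi[of "\<phi> x" \<gamma>] unfolding u_def by linarith
    qed
  qed
qed


end
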